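(* Let $R$ be a commutative ring and $I$ an ideal of $R$ with $I\subseteq J(R)$. Then $R$ is locally stable if and only if $R/I$ is locally stable.
   Context: All rings are commutative with identity; $J(R)$ is the Jacobson radical. A ring $S$ has stable range 1 if whenever $aS+bS=S$ there is $y\in S$ with $a+by$ a unit. $S$ is locally stable if whenever $a,b\in S$ with $aS+bS=S$ there is $y\in S$ such that $S/(a+by)S$ has stable range 1. *)

theory Defs
  imports "HOL-Algebra.Algebra"
begin

text \<open>Jacobson radical of a commutative ring: intersection of all maximal ideals
  (equal to the whole carrier for the zero ring).\<close>
definition jacobson_radical :: "('a, 'b) ring_scheme \<Rightarrow> 'a set" where
  "jacobson_radical R = carrier R \<inter> \<Inter> {M. maximalideal M R}"

definition stable_range_1 :: "('a, 'b) ring_scheme \<Rightarrow> bool" where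
  "stable_range_1 S \<longleftrightarrow>
     (\<forall>a\<in>carrier S. \<forall>b\<in>carrier S.
        {a \<otimes>\<^bsub>S\<^esub> x \<oplus>\<^bsub>S\<^esub> b \<otimes>\<^bsub>S\<^esub> z | x z. x \<in> carrier S \<and> z \<in> carrier S} = carrier S
        \<longrightarrow> (\<exists>y\<in>carrier S. a \<oplus>\<^bsub>S\<^esub> b \<otimes>\<^bsub>S\<^esub> y \<in> Units S))"

definition locally_stable :: "('a, 'b) ring_scheme \<Rightarrow> bool" where
  "locally_stable S \<longleftrightarrow>
     (\<forall>a\<in>carrier S. \<forall>b\<in>carrier S.
        {a \<otimes>\<^bsub>S\<^esub> x \<oplus>\<^bsub>S\<^esub> b \<otimes>\<^bsub>S\<^esub> z | x z. x \<in> carrier S \<and> z \<in> carrier S} = carrier S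
        \<longrightarrow> (\<exists>y\<in>carrier S. stable_range_1 (S Quot (PIdl\<^bsub>S\<^esub> (a \<oplus>\<^bsub>S\<^esub> b \<otimes>\<^bsub>S\<^esub> y)))))"

end

theory Submission imports Defs begin

definition srm :: "('a, 'b) ring_scheme \<Rightarrow> 'a set \<Rightarrow> bool" where
  "srm R K \<longleftrightarrow> (\<forall>a\<in>carrier R. \<forall>b\<in>carrier R.
     (\<exists>x\<in>carrier R. \<exists>z\<in>carrier R. a \<otimes>\<^bsub>R\<^esub> x \<oplus>\<^bsub>R\<^esub> b \<otimes>\<^bsub>R\<^esub> z \<ominus>\<^bsub>R\<^esub> \<one>\<^bsub>R\<^esub> \<in> K)
     \<longrightarrow> (\<exists>y\<in>carrier R. \<exists>u\<in>carrier R. (a \<oplus>\<^bsub>R\<^esub> b \<otimes>\<^bsub>R\<^esub> y) \<otimes>\<^bsub>R\<^esub> u \<ominus>\<^bsub>R\<^esub> \<one>\<^bsub>R\<^esub> \<in> K))"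

lemma comax_iff:
  fixes S (structure)
  assumes "cring S" "a \<in> carrier S" "b \<in> carrier S"
  shows "{a \<otimes> x \<oplus> b \<otimes> z | x z. x \<in> carrier S \<and> z \<in> carrier S} = carrier S
     \<longleftrightarrow> (\<exists>x\<in>carrier S. \<exists>z\<in>carrier S. a \<otimes> x \<oplus> b \<otimes> z = \<one>)"
proof -
  interpret cring S by fact
  have one: "\<exists>x\<in>carrier S. \<exists>z\<in>carrier S. a \<otimes> x \<oplus> b \<otimes> z = \<one>"
    if "{a \<otimes> x \<oplus> b \<otimes> z | x z. x \<in> carrier S \<and> z \<in> carrier S} = carrier S"
  proof -
    have "\<one> \<in> {a \<otimes> x \<oplus> b \<otimes> z | x z. x \<in> carrier S \<and> z \<in> carrier S}"
      using that by simp
    then show ?thesis apply (simp only: mem_Collect_eq) apply (elim exE conjE) apply (rule bexI) apply (rule bexI) apply (erule sym) by assumption+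
  qed
  have two: "{a \<otimes> x \<oplus> b \<otimes> z | x z. x \<in> carrier S \<and> z \<in> carrier S} = carrier S"
    if "\<exists>x\<in>carrier S. \<exists>z\<in>carrier S. a \<otimes> x \<oplus> b \<otimes> z = \<one>"
  proof -
    from that obtain x z where xz: "x \<in> carrier S" "z \<in> carrier S" "a \<otimes> x \<oplus> b \<otimes> z = \<one>" by blast
    show ?thesis
    proof
      show "{a \<otimes> x \<oplus> b \<otimes> z | x z. x \<in> carrier S \<and> z \<in> carrier S} \<subseteq> carrier S"
        using assms by auto
      show "carrier S \<subseteq> {a \<otimes> x \<oplus> b \<otimes> z | x z. x \<in> carrier S \<and> z \<in> carrier S}"
      proof
        fix r assume r: "r \<in> carrier S"
        have "r = (a \<otimes> x \<oplus> b \<otimes> z) \<otimes> r" using xz r by simp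
        also have "\<dots> = a \<otimes> (x \<otimes> r) \<oplus> b \<otimes> (z \<otimes> r)" using xz(1,2) r assms by (simp add: l_distr m_assoc)
        finally show "r \<in> {a \<otimes> x \<oplus> b \<otimes> z | x z. x \<in> carrier S \<and> z \<in> carrier S}"
          using xz r by blast
      qed
    qed
  qed
  show ?thesis using one two by blast
qed

lemma units_iff:
  fixes S (structure)
  assumes "cring S"
  shows "v \<in> Units S \<longleftrightarrow> v \<in> carrier S \<and> (\<exists>u\<in>carrier S. v \<otimes> u = \<one>)"
proof -
  interpret cring S by fact
  show ?thesis unfolding Units_def using m_comm by auto
qed

lemma sr1_srm0:
  fixes S (structure)
  assumes "cring S"
  shows "stable_range_1 S \<longleftrightarrow> srm S {\<zero>}"
proof -
  interpret cring S by fact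
  have e: "\<And>w. w \<in> carrier S \<Longrightarrow> (w \<ominus> \<one> \<in> {\<zero>}) = (w = \<one>)"
    by (metis one_closed r_right_minus_eq singleton_iff)
  show ?thesis
    unfolding stable_range_1_def srm_def
    using comax_iff[OF assms] units_iff[OF assms] e by simp
qed

lemma ls_alt:
  fixes S (structure)
  assumes "cring S"
  shows "locally_stable S \<longleftrightarrow> (\<forall>a\<in>carrier S. \<forall>b\<in>carrier S.
     (\<exists>x\<in>carrier S. \<exists>z\<in>carrier S. a \<otimes> x \<oplus> b \<otimes> z = \<one>) \<longrightarrow>
     (\<exists>y\<in>carrier S. stable_range_1 (S Quot (PIdl (a \<oplus> b \<otimes> y)))))"
  unfolding locally_stable_def using comax_iff[OF assms] by simp

lemma srm_image:
  assumes hc: "ring_hom_cring R S h" and im: "h ` carrier R = carrier S"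
    and mem: "\<forall>w\<in>carrier R. (h w \<in> K') = (w \<in> K)"
  shows "srm S K' \<longleftrightarrow> srm R K"
proof -
  interpret ring_hom_cring R S h by fact
  have B: "\<And>P. (\<forall>s\<in>carrier S. P s) = (\<forall>r\<in>carrier R. P (h r))" unfolding im[symmetric] by auto
  have E: "\<And>P. (\<exists>s\<in>carrier S. P s) = (\<exists>r\<in>carrier R. P (h r))" unfolding im[symmetric] by auto
  have e1: "h a \<otimes>\<^bsub>S\<^esub> h x \<oplus>\<^bsub>S\<^esub> h b \<otimes>\<^bsub>S\<^esub> h z \<ominus>\<^bsub>S\<^esub> \<one>\<^bsub>S\<^esub>
      = h (a \<otimes>\<^bsub>R\<^esub> x \<oplus>\<^bsub>R\<^esub> b \<otimes>\<^bsub>R\<^esub> z \<ominus>\<^bsub>R\<^esub> \<one>\<^bsub>R\<^esub>)"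
    if "a \<in> carrier R" "b \<in> carrier R" "x \<in> carrier R" "z \<in> carrier R" for a b x z
    using that by (simp add: a_minus_def)
  have e2: "(h a \<oplus>\<^bsub>S\<^esub> h b \<otimes>\<^bsub>S\<^esub> h y) \<otimes>\<^bsub>S\<^esub> h u \<ominus>\<^bsub>S\<^esub> \<one>\<^bsub>S\<^esub>
      = h ((a \<oplus>\<^bsub>R\<^esub> b \<otimes>\<^bsub>R\<^esub> y) \<otimes>\<^bsub>R\<^esub> u \<ominus>\<^bsub>R\<^esub> \<one>\<^bsub>R\<^esub>)"
    if "a \<in> carrier R" "b \<in> carrier R" "y \<in> carrier R" "u \<in> carrier R" for a b y u
    using that by (simp add: a_minus_def)
  have "srm S K' \<longleftrightarrow> (\<forall>a\<in>carrier R. \<forall>b\<in>carrier R.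
     (\<exists>x\<in>carrier R. \<exists>z\<in>carrier R. h a \<otimes>\<^bsub>S\<^esub> h x \<oplus>\<^bsub>S\<^esub> h b \<otimes>\<^bsub>S\<^esub> h z \<ominus>\<^bsub>S\<^esub> \<one>\<^bsub>S\<^esub> \<in> K')
     \<longrightarrow> (\<exists>y\<in>carrier R. \<exists>u\<in>carrier R. (h a \<oplus>\<^bsub>S\<^esub> h b \<otimes>\<^bsub>S\<^esub> h y) \<otimes>\<^bsub>S\<^esub> h u \<ominus>\<^bsub>S\<^esub> \<one>\<^bsub>S\<^esub> \<in> K'))"
    unfolding srm_def B E ..
  also have "\<dots> \<longleftrightarrow> srm R K"
  proof -
    have m1: "(h a \<otimes>\<^bsub>S\<^esub> h x \<oplus>\<^bsub>S\<^esub> h b \<otimes>\<^bsub>S\<^esub> h z \<ominus>\<^bsub>S\<^esub> \<one>\<^bsub>S\<^esub> \<in> K')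
      = (a \<otimes>\<^bsub>R\<^esub> x \<oplus>\<^bsub>R\<^esub> b \<otimes>\<^bsub>R\<^esub> z \<ominus>\<^bsub>R\<^esub> \<one>\<^bsub>R\<^esub> \<in> K)"
      if "a \<in> carrier R" "b \<in> carrier R" "x \<in> carrier R" "z \<in> carrier R" for a b x z
      unfolding e1[OF that] by (rule mem[rule_format]) (use that in simp)
    have m2: "((h a \<oplus>\<^bsub>S\<^esub> h b \<otimes>\<^bsub>S\<^esub> h y) \<otimes>\<^bsub>S\<^esub> h u \<ominus>\<^bsub>S\<^esub> \<one>\<^bsub>S\<^esub> \<in> K')
      = ((a \<oplus>\<^bsub>R\<^esub> b \<otimes>\<^bsub>R\<^esub> y) \<otimes>\<^bsub>R\<^esub> u \<ominus>\<^bsub>R\<^esub> \<one>\<^bsub>R\<^esub> \<in> K)"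
      if "a \<in> carrier R" "b \<in> carrier R" "y \<in> carrier R" "u \<in> carrier R" for a b y u
      unfolding e2[OF that] by (rule mem[rule_format]) (use that in simp)
    show ?thesis unfolding srm_def by (simp only: m1 m2 cong: ball_cong bex_cong conj_cong imp_cong)
  qed
  finally show ?thesis .
qed

lemma quot_facts:
  fixes R (structure)
  assumes "cring R" and "ideal K R"
  shows "ring_hom_cring R (R Quot K) ((+>\<^bsub>R\<^esub>) K)"
    and "(+>\<^bsub>R\<^esub>) K ` carrier R = carrier (R Quot K)"
    and "cring (R Quot K)"
    and "\<And>a b. a \<in> carrier R \<Longrightarrow> b \<in> carrier R \<Longrightarrow>
            (K +>\<^bsub>R\<^esub> a = K +>\<^bsub>R\<^esub> b) \<longleftrightarrow> a \<ominus>\<^bsub>R\<^esub> b \<in> K"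
    and "\<And>w. w \<in> carrier R \<Longrightarrow> (K +>\<^bsub>R\<^esub> w \<in> {\<zero>\<^bsub>R Quot K\<^esub>}) \<longleftrightarrow> w \<in> K"
proof -
  interpret cring R by fact
  interpret ideal K R by fact
  show "ring_hom_cring R (R Quot K) ((+>\<^bsub>R\<^esub>) K)" by (rule rcos_ring_hom_cring) fact
  show "(+>\<^bsub>R\<^esub>) K ` carrier R = carrier (R Quot K)"
    unfolding FactRing_def A_RCOSETS_def' by auto
  show "cring (R Quot K)" by (rule quotient_is_cring) fact
  show eq: "(K +>\<^bsub>R\<^esub> a = K +>\<^bsub>R\<^esub> b) \<longleftrightarrow> a \<ominus>\<^bsub>R\<^esub> b \<in> K"
    if "a \<in> carrier R" "b \<in> carrier R" for a b
  proof
    assume "K +> a = K +> b"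
    then have "a \<in> K +> b" using a_rcos_self[OF that(1)] by simp
    then show "a \<ominus> b \<in> K" using a_rcos_module_minus[OF ring_axioms that(2) that(1)] by simp
  next
    assume "a \<ominus> b \<in> K"
    then have "a \<in> K +> b" using a_rcos_module_minus[OF ring_axioms that(2) that(1)] by simp
    then show "K +> a = K +> b" using a_repr_independence'[of a b] that by simp
  qed
  show "(K +>\<^bsub>R\<^esub> w \<in> {\<zero>\<^bsub>R Quot K\<^esub>}) \<longleftrightarrow> w \<in> K" if "w \<in> carrier R" for w
  proof -
    have "K +> \<zero> = K" by (rule a_rcos_const) simp
    then have "(K +> w = K) \<longleftrightarrow> w \<ominus> \<zero> \<in> K" using eq[of w "\<zero>"] that by simp
    then show ?thesis using that by (simp add: FactRing_def a_minus_def)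
  qed
qed

lemma sr1_quot:
  fixes R (structure)
  assumes "cring R" and "ideal K R"
  shows "stable_range_1 (R Quot K) \<longleftrightarrow> srm R K"
  using sr1_srm0[OF quot_facts(3)[OF assms]] srm_image[OF quot_facts(1,2)[OF assms]] quot_facts(5)[OF assms]
  by blast

lemma J1:
  fixes R (structure)
  assumes "cring R" and i: "i \<in> jacobson_radical R"
  shows "\<one> \<oplus> i \<in> Units R"
proof (rule ccontr)
  interpret cring R by fact
  assume nu: "\<one> \<oplus> i \<notin> Units R"
  have ic: "i \<in> carrier R" using i unfolding jacobson_radical_def by auto
  define e where "e = \<one> \<oplus> i"
  have ec: "e \<in> carrier R" using ic e_def by simp
  define A where "A = {M. ideal M R \<and> PIdl e \<subseteq> M \<and> \<one> \<notin> M}"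
  have one_notin: "\<one> \<notin> PIdl e"
  proof
    assume "\<one> \<in> PIdl e"
    then obtain x where x: "x \<in> carrier R" "\<one> = x \<otimes> e" unfolding cgenideal_def by blast
    then have "e \<in> Units R" using units_iff[OF assms(1)] ec m_comm by metis
    then show False using nu e_def by simp
  qed
  have Ane: "PIdl e \<in> A" unfolding A_def using cgenideal_ideal[OF ec] one_notin by simp
  have "\<exists>M\<in>A. \<forall>N\<in>A. M \<subseteq> N \<longrightarrow> N = M"
  proof (rule subset_Zorn_nonempty)
    show "A \<noteq> {}" using Ane by blast
  next
    fix C assume Cne: "C \<noteq> {}" and ch: "subset.chain A C"
    have ch2: "subset.chain {I. ideal I R} C"
      using ch unfolding pred_on.chain_def A_def by blast
    have "ideal (\<Union>C) R" using chain_Union_is_ideal[OF ch2] Cne by simp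
    moreover have "PIdl e \<subseteq> \<Union>C"
      using Cne ch unfolding pred_on.chain_def A_def by blast
    moreover have "\<one> \<notin> \<Union>C"
      using ch unfolding pred_on.chain_def A_def by blast
    ultimately show "\<Union>C \<in> A" unfolding A_def by simp
  qed
  then obtain M where MA: "M \<in> A" and Mmax: "\<forall>N\<in>A. M \<subseteq> N \<longrightarrow> N = M" by blast
  have Mi: "ideal M R" and Me: "PIdl e \<subseteq> M" and M1: "\<one> \<notin> M" using MA unfolding A_def by auto
  have "maximalideal M R"
  proof (rule maximalidealI[OF Mi])
    show "carrier R \<noteq> M" using M1 by auto
  next
    fix J assume J: "ideal J R" "M \<subseteq> J" "J \<subseteq> carrier R"
    show "J = M \<or> J = carrier R"
    proof (cases "\<one> \<in> J")
      case True then show ?thesis using ideal.one_imp_carrier[OF J(1)] by simp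
    next
      case False then have "J \<in> A" unfolding A_def using J Me by auto
      then show ?thesis using Mmax J(2) by simp
    qed
  qed
  then have iM: "i \<in> M" using i unfolding jacobson_radical_def by blast
  have eM: "e \<in> M" using Me cgenideal_self[OF ec] by blast
  have "e \<ominus> i \<in> M" using iM eM Mi by (simp add: additive_subgroup.a_subgroup ideal.axioms(1) ideal.I_l_closed
       a_minus_def additive_subgroup.a_closed additive_subgroup.a_inv_closed)
  moreover have "e \<ominus> i = \<one>" using ic unfolding e_def by algebra
  ultimately show False using M1 by simp
qed

lemma alg1:
  fixes R (structure)
  assumes "cring R" "w \<in> carrier R" "l \<in> carrier R" "i \<in> carrier R" "v \<in> carrier R"
    and "w \<ominus> \<one> = l \<oplus> i" "(\<one> \<oplus> i) \<otimes> v = \<one>"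
  shows "w \<otimes> v \<ominus> \<one> = l \<otimes> v"
proof -
  interpret cring R by fact
  have w: "w = l \<oplus> (\<one> \<oplus> i)" using assms(2-4,6)
    by (metis (no_types, lifting) a_assoc a_comm add.inv_solve_right a_minus_def one_closed
        add.m_closed add.inv_closed)
  have "w \<otimes> v = l \<otimes> v \<oplus> (\<one> \<oplus> i) \<otimes> v" unfolding w using assms(2-5) by (simp add: l_distr)
  then have "w \<otimes> v = l \<otimes> v \<oplus> \<one>" using assms(7) by simp
  then show ?thesis using assms(3,5) by (simp add: a_minus_def a_assoc r_neg)
qed

lemma srm_J:
  fixes R (structure)
  assumes cr: "cring R" and iI: "ideal I R" and IJ: "I \<subseteq> jacobson_radical R" and iL: "ideal L R"
  shows "srm R {l \<oplus> i | l i. l \<in> L \<and> i \<in> I} \<longleftrightarrow> srm R L"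
proof -
  interpret cring R by fact
  define LI where "LI = {l \<oplus> i | l i. l \<in> L \<and> i \<in> I}"
  have Lc: "\<And>l. l \<in> L \<Longrightarrow> l \<in> carrier R" using iL by (meson ideal.Icarr)
  have Ic: "\<And>i. i \<in> I \<Longrightarrow> i \<in> carrier R" using iI by (meson ideal.Icarr)
  have Lm: "\<And>l v. l \<in> L \<Longrightarrow> v \<in> carrier R \<Longrightarrow> l \<otimes> v \<in> L" using iL by (meson ideal.I_r_closed)
  have sub: "L \<subseteq> LI"
  proof
    fix l assume "l \<in> L"
    moreover have "\<zero> \<in> I" using iI by (simp add: additive_subgroup.zero_closed ideal.axioms(1))
    moreover have "l = l \<oplus> \<zero>" using Lc[OF \<open>l \<in> L\<close>] by simp
    ultimately show "l \<in> LI" unfolding LI_def by blast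
  qed
  have inv: "\<exists>v\<in>carrier R. (\<one> \<oplus> i) \<otimes> v = \<one>" if "i \<in> I" for i
    using J1[OF cr, of i] that IJ units_iff[OF cr] by blast
  have fix1: "\<exists>v\<in>carrier R. w \<otimes> v \<ominus> \<one> \<in> L" if wc: "w \<in> carrier R" and wl: "w \<ominus> \<one> \<in> LI" for w
  proof -
    obtain l i where li: "l \<in> L" "i \<in> I" "w \<ominus> \<one> = l \<oplus> i" using wl unfolding LI_def by blast
    obtain v where v: "v \<in> carrier R" "(\<one> \<oplus> i) \<otimes> v = \<one>" using inv[OF li(2)] by blast
    have "w \<otimes> v \<ominus> \<one> = l \<otimes> v" using alg1[OF cr wc Lc[OF li(1)] Ic[OF li(2)] v(1) li(3) v(2)] .
    then show ?thesis using Lm[OF li(1) v(1)] v(1) by (intro bexI[of _ v]) simp_all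
  qed
  show ?thesis unfolding LI_def[symmetric]
  proof
    assume H: "srm R LI"
    show "srm R L" unfolding srm_def
    proof (intro ballI impI)
      fix a b assume ab: "a \<in> carrier R" "b \<in> carrier R"
        and "\<exists>x\<in>carrier R. \<exists>z\<in>carrier R. a \<otimes> x \<oplus> b \<otimes> z \<ominus> \<one> \<in> L"
      then have "\<exists>x\<in>carrier R. \<exists>z\<in>carrier R. a \<otimes> x \<oplus> b \<otimes> z \<ominus> \<one> \<in> LI" using sub by blast
      then obtain y u where yu: "y \<in> carrier R" "u \<in> carrier R" "(a \<oplus> b \<otimes> y) \<otimes> u \<ominus> \<one> \<in> LI"
        using H ab unfolding srm_def by blast
      obtain v where v: "v \<in> carrier R" "(a \<oplus> b \<otimes> y) \<otimes> u \<otimes> v \<ominus> \<one> \<in> L"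
        using fix1[OF _ yu(3)] ab yu by auto
      have "(a \<oplus> b \<otimes> y) \<otimes> (u \<otimes> v) \<ominus> \<one> \<in> L" using v ab yu by (simp add: m_assoc)
      then show "\<exists>y\<in>carrier R. \<exists>u\<in>carrier R. (a \<oplus> b \<otimes> y) \<otimes> u \<ominus> \<one> \<in> L"
        using yu v by blast
    qed
  next
    assume H: "srm R L"
    show "srm R LI" unfolding srm_def
    proof (intro ballI impI)
      fix a b assume ab: "a \<in> carrier R" "b \<in> carrier R"
        and "\<exists>x\<in>carrier R. \<exists>z\<in>carrier R. a \<otimes> x \<oplus> b \<otimes> z \<ominus> \<one> \<in> LI"
      then obtain x z where xz: "x \<in> carrier R" "z \<in> carrier R" "a \<otimes> x \<oplus> b \<otimes> z \<ominus> \<one> \<in> LI" by blast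
      obtain v where v: "v \<in> carrier R" "(a \<otimes> x \<oplus> b \<otimes> z) \<otimes> v \<ominus> \<one> \<in> L"
        using fix1[OF _ xz(3)] ab xz by auto
      have "(a \<otimes> x \<oplus> b \<otimes> z) \<otimes> v = a \<otimes> (x \<otimes> v) \<oplus> b \<otimes> (z \<otimes> v)"
        using ab xz(1,2) v(1) by (simp add: l_distr m_assoc)
      then have "\<exists>x\<in>carrier R. \<exists>z\<in>carrier R. a \<otimes> x \<oplus> b \<otimes> z \<ominus> \<one> \<in> L"
        using v xz(1,2) by (metis m_closed)
      then obtain y u where yu: "y \<in> carrier R" "u \<in> carrier R" "(a \<oplus> b \<otimes> y) \<otimes> u \<ominus> \<one> \<in> L"
        using H ab unfolding srm_def by blast
      then show "\<exists>y\<in>carrier R. \<exists>u\<in>carrier R. (a \<oplus> b \<otimes> y) \<otimes> u \<ominus> \<one> \<in> LI"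
        using sub by blast
    qed
  qed
qed

lemma srm_Q:
  fixes R (structure)
  assumes cr: "cring R" and iI: "ideal I R" and cc: "c \<in> carrier R"
  shows "srm (R Quot I) (PIdl\<^bsub>R Quot I\<^esub> (I +> c)) \<longleftrightarrow> srm R {l \<oplus> i | l i. l \<in> PIdl c \<and> i \<in> I}"
proof (rule srm_image[OF quot_facts(1,2)[OF cr iI]], intro ballI)
  interpret cring R by fact
  fix w assume wc: "w \<in> carrier R"
  have hm: "\<And>x y. x \<in> carrier R \<Longrightarrow> y \<in> carrier R \<Longrightarrow> (I +> x) \<otimes>\<^bsub>R Quot I\<^esub> (I +> y) = I +> (x \<otimes> y)"
    using ring_hom_mult[OF ideal.rcos_ring_hom[OF iI]] by simp
  have "(I +> w \<in> PIdl\<^bsub>R Quot I\<^esub> (I +> c)) \<longleftrightarrow> (\<exists>r\<in>carrier R. I +> w = (I +> r) \<otimes>\<^bsub>R Quot I\<^esub> (I +> c))"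
    unfolding cgenideal_def quot_facts(2)[OF cr iI, symmetric] by blast
  also have "\<dots> \<longleftrightarrow> (\<exists>r\<in>carrier R. w \<ominus> r \<otimes> c \<in> I)"
    using hm cc wc quot_facts(4)[OF cr iI] by simp
  also have "\<dots> \<longleftrightarrow> w \<in> {l \<oplus> i | l i. l \<in> PIdl c \<and> i \<in> I}"
  proof
    assume "\<exists>r\<in>carrier R. w \<ominus> r \<otimes> c \<in> I"
    then obtain r where r: "r \<in> carrier R" "w \<ominus> r \<otimes> c \<in> I" by blast
    have "w = r \<otimes> c \<oplus> (w \<ominus> r \<otimes> c)" using r(1) cc wc by algebra
    moreover have "r \<otimes> c \<in> PIdl c" using r(1) unfolding cgenideal_def by blast
    ultimately show "w \<in> {l \<oplus> i | l i. l \<in> PIdl c \<and> i \<in> I}" using r(2) by blast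
  next
    assume "w \<in> {l \<oplus> i | l i. l \<in> PIdl c \<and> i \<in> I}"
    then obtain r i where ri: "r \<in> carrier R" "i \<in> I" "w = r \<otimes> c \<oplus> i"
      unfolding cgenideal_def by blast
    have ic: "i \<in> carrier R" using ri(2) iI by (meson ideal.Icarr)
    have "w \<ominus> r \<otimes> c = i" using ri(1,3) ic cc by algebra
    then show "\<exists>r\<in>carrier R. w \<ominus> r \<otimes> c \<in> I" using ri by metis
  qed
  finally show "(I +> w \<in> PIdl\<^bsub>R Quot I\<^esub> (I +> c)) = (w \<in> {l \<oplus> i | l i. l \<in> PIdl c \<and> i \<in> I})" .
qed

theorem proposition2p5:
  fixes R (structure) and I :: "'a set"
  assumes "cring R" and "ideal I R" and "I \<subseteq> jacobson_radical R"
  shows "locally_stable R \<longleftrightarrow> locally_stable (R Quot I)"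
proof -
  note cr = assms(1) and iI = assms(2) and IJ = assms(3)
  interpret cring R by fact
  define Q where "Q = R Quot I"
  have cQ: "cring Q" unfolding Q_def by (rule quot_facts(3)[OF cr iI])
  have im: "(+>) I ` carrier R = carrier Q" unfolding Q_def by (rule quot_facts(2)[OF cr iI])
  have hm: "\<And>x y. x \<in> carrier R \<Longrightarrow> y \<in> carrier R \<Longrightarrow> (I +> x) \<otimes>\<^bsub>Q\<^esub> (I +> y) = I +> (x \<otimes> y)"
    using ring_hom_mult[OF ideal.rcos_ring_hom[OF iI]] unfolding Q_def by simp
  have ha: "\<And>x y. x \<in> carrier R \<Longrightarrow> y \<in> carrier R \<Longrightarrow> (I +> x) \<oplus>\<^bsub>Q\<^esub> (I +> y) = I +> (x \<oplus> y)"
    using ring_hom_add[OF ideal.rcos_ring_hom[OF iI]] unfolding Q_def by simp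
  have h1: "\<one>\<^bsub>Q\<^esub> = I +> \<one>" unfolding Q_def by (simp add: FactRing_def)
  have B: "\<And>P. (\<forall>s\<in>carrier Q. P s) = (\<forall>r\<in>carrier R. P (I +> r))" unfolding im[symmetric] by auto
  have E: "\<And>P. (\<exists>s\<in>carrier Q. P s) = (\<exists>r\<in>carrier R. P (I +> r))" unfolding im[symmetric] by auto
  have K1: "stable_range_1 (Q Quot PIdl\<^bsub>Q\<^esub> (I +> c)) \<longleftrightarrow> srm R (PIdl c)" if cc: "c \<in> carrier R" for c
  proof -
    have "I +> c \<in> carrier Q" using im cc by blast
    then have "ideal (PIdl\<^bsub>Q\<^esub> (I +> c)) Q" by (rule cring.cgenideal_ideal[OF cQ])
    then have "stable_range_1 (Q Quot PIdl\<^bsub>Q\<^esub> (I +> c)) \<longleftrightarrow> srm Q (PIdl\<^bsub>Q\<^esub> (I +> c))"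
      by (rule sr1_quot[OF cQ])
    also have "\<dots> \<longleftrightarrow> srm R {l \<oplus> i | l i. l \<in> PIdl c \<and> i \<in> I}"
      unfolding Q_def by (rule srm_Q[OF cr iI cc])
    also have "\<dots> \<longleftrightarrow> srm R (PIdl c)"
      by (rule srm_J[OF cr iI IJ cgenideal_ideal[OF cc]])
    finally show ?thesis .
  qed
  have K2: "(\<exists>x\<in>carrier R. \<exists>z\<in>carrier R. (I +> a) \<otimes>\<^bsub>Q\<^esub> (I +> x) \<oplus>\<^bsub>Q\<^esub> (I +> b) \<otimes>\<^bsub>Q\<^esub> (I +> z) = \<one>\<^bsub>Q\<^esub>)
      \<longleftrightarrow> (\<exists>x\<in>carrier R. \<exists>z\<in>carrier R. a \<otimes> x \<oplus> b \<otimes> z = \<one>)"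
    if ab: "a \<in> carrier R" "b \<in> carrier R" for a b
  proof
    assume "\<exists>x\<in>carrier R. \<exists>z\<in>carrier R. (I +> a) \<otimes>\<^bsub>Q\<^esub> (I +> x) \<oplus>\<^bsub>Q\<^esub> (I +> b) \<otimes>\<^bsub>Q\<^esub> (I +> z) = \<one>\<^bsub>Q\<^esub>"
    then obtain x z where xz: "x \<in> carrier R" "z \<in> carrier R"
      "(I +> a) \<otimes>\<^bsub>Q\<^esub> (I +> x) \<oplus>\<^bsub>Q\<^esub> (I +> b) \<otimes>\<^bsub>Q\<^esub> (I +> z) = \<one>\<^bsub>Q\<^esub>" by blast
    then have "I +> (a \<otimes> x \<oplus> b \<otimes> z) = I +> \<one>" using hm ha h1 ab by simp
    then have "a \<otimes> x \<oplus> b \<otimes> z \<ominus> \<one> \<in> I" using quot_facts(4)[OF cr iI] ab xz by simp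
    then obtain i where i: "i \<in> I" "a \<otimes> x \<oplus> b \<otimes> z \<ominus> \<one> = i" by blast
    have ic: "i \<in> carrier R" using i(1) iI by (meson ideal.Icarr)
    obtain v where v: "v \<in> carrier R" "(\<one> \<oplus> i) \<otimes> v = \<one>"
      using J1[OF cr, of i] i(1) IJ units_iff[OF cr] by blast
    have "a \<otimes> x \<oplus> b \<otimes> z = (a \<otimes> x \<oplus> b \<otimes> z \<ominus> \<one>) \<oplus> \<one>" using ab xz(1,2) by algebra
    also have "\<dots> = \<one> \<oplus> i" unfolding i(2) using ic by (simp add: a_comm)
    finally have "a \<otimes> x \<oplus> b \<otimes> z = \<one> \<oplus> i" .
    then have "(a \<otimes> x \<oplus> b \<otimes> z) \<otimes> v = \<one>" using v by simp
    moreover have "(a \<otimes> x \<oplus> b \<otimes> z) \<otimes> v = a \<otimes> (x \<otimes> v) \<oplus> b \<otimes> (z \<otimes> v)"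
      using ab xz(1,2) v(1) by (simp add: l_distr m_assoc)
    ultimately show "\<exists>x\<in>carrier R. \<exists>z\<in>carrier R. a \<otimes> x \<oplus> b \<otimes> z = \<one>"
      using xz(1,2) v(1) by (metis m_closed)
  next
    assume "\<exists>x\<in>carrier R. \<exists>z\<in>carrier R. a \<otimes> x \<oplus> b \<otimes> z = \<one>"
    then obtain x z where xz: "x \<in> carrier R" "z \<in> carrier R" "a \<otimes> x \<oplus> b \<otimes> z = \<one>" by blast
    have "(I +> a) \<otimes>\<^bsub>Q\<^esub> (I +> x) \<oplus>\<^bsub>Q\<^esub> (I +> b) \<otimes>\<^bsub>Q\<^esub> (I +> z) = \<one>\<^bsub>Q\<^esub>"
      using hm ha h1 ab xz by simp
    then show "\<exists>x\<in>carrier R. \<exists>z\<in>carrier R. (I +> a) \<otimes>\<^bsub>Q\<^esub> (I +> x) \<oplus>\<^bsub>Q\<^esub> (I +> b) \<otimes>\<^bsub>Q\<^esub> (I +> z) = \<one>\<^bsub>Q\<^esub>"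
      using xz by blast
  qed
  have K3: "\<And>a b y. a \<in> carrier R \<Longrightarrow> b \<in> carrier R \<Longrightarrow> y \<in> carrier R \<Longrightarrow>
      (I +> a) \<oplus>\<^bsub>Q\<^esub> (I +> b) \<otimes>\<^bsub>Q\<^esub> (I +> y) = I +> (a \<oplus> b \<otimes> y)"
    using hm ha by simp
  have "locally_stable R \<longleftrightarrow> (\<forall>a\<in>carrier R. \<forall>b\<in>carrier R.
     (\<exists>x\<in>carrier R. \<exists>z\<in>carrier R. a \<otimes> x \<oplus> b \<otimes> z = \<one>) \<longrightarrow>
     (\<exists>y\<in>carrier R. srm R (PIdl (a \<oplus> b \<otimes> y))))"
    using ls_alt[OF cr] sr1_quot[OF cr cgenideal_ideal] by simp
  moreover have "locally_stable Q \<longleftrightarrow> (\<forall>a\<in>carrier R. \<forall>b\<in>carrier R.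
     (\<exists>x\<in>carrier R. \<exists>z\<in>carrier R. (I +> a) \<otimes>\<^bsub>Q\<^esub> (I +> x) \<oplus>\<^bsub>Q\<^esub> (I +> b) \<otimes>\<^bsub>Q\<^esub> (I +> z) = \<one>\<^bsub>Q\<^esub>) \<longrightarrow>
     (\<exists>y\<in>carrier R. stable_range_1 (Q Quot PIdl\<^bsub>Q\<^esub> ((I +> a) \<oplus>\<^bsub>Q\<^esub> (I +> b) \<otimes>\<^bsub>Q\<^esub> (I +> y)))))"
    unfolding ls_alt[OF cQ] B E ..
  moreover have "\<dots> \<longleftrightarrow> (\<forall>a\<in>carrier R. \<forall>b\<in>carrier R.
     (\<exists>x\<in>carrier R. \<exists>z\<in>carrier R. a \<otimes> x \<oplus> b \<otimes> z = \<one>) \<longrightarrow>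
     (\<exists>y\<in>carrier R. srm R (PIdl (a \<oplus> b \<otimes> y))))"
    using K1 K2 K3 by (simp cong: ball_cong bex_cong conj_cong imp_cong)
  ultimately show ?thesis unfolding Q_def by simp
qed

end
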